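(* If the multiply twisted product Finsler manifold $M_0\times_{f_1}M_1\times\cdots\times_{f_{\mathbf b}}M_{\mathbf b}$ is $C$-reducible, then it is a Riemannian manifold.
   Context: Let $(M_i,F_i)$, $0\le i\le\mathbf b$, be Finsler manifolds and $f_i:M_0\times M_i\to(0,\infty)$ smooth. The multiply twisted product Finsler manifold is $M=M_0\times\cdots\times M_{\mathbf b}$ with $F(v_0,\dots,v_{\mathbf b})=\sqrt{F_0^2(v_0)+\sum_{i=1}^{\mathbf b}f_i^2(\pi_0(v_0),\pi_i(v_i))F_i^2(v_i)}$ on $TM_0^0\times\cdots\times TM_{\mathbf b}^0$ ($TM_i^0=TM_i\setminus\{0\}$, $\pi_i:TM_i\to M_i$). For a Finsler manifold $(M,F)$ of dimension $n$ with local coordinates $(x^i,y^i)$: $g_{ij}=\frac12\frac{\partial^2F^2}{\partial y^i\partial y^j}$, $(g^{ij})$ its inverse, $C_{ijk}=\frac12\frac{\partial g_{ij}}{\partial y^k}$, $I_i=g^{jk}C_{ijk}$, $h_{ij}=g_{ij}-\frac1{F^2}g_{ip}y^pg_{jq}y^q$, and $M_{ijk}=C_{ijk}-\frac1{n+1}(I_ih_{jk}+I_jh_{ik}+I_kh_{ij})$. $F$ is $C$-reducible if $M_{ijk}=0$, and Riemannian if $C_{ijk}=0$ (i.e. $F^2$ is quadratic in $y$). *)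

theory Defs
  imports "HOL-Analysis.Analysis"
begin

text \<open>The product manifold is modelled in a product chart:
  the total coordinate space is real^'n; each coordinate k belongs to the factor blk k.
  Points of the tangent bundle are pairs (x,y) of position and fibre coordinates.\<close>

text \<open>Coordinate directions on the tangent bundle: Inl k = x^k, Inr k = y^k.\<close>
definition fin_shift :: "('n::finite + 'n) \<Rightarrow> real \<Rightarrow> ((real^'n) \<times> (real^'n)) \<Rightarrow> ((real^'n) \<times> (real^'n))" where
  "fin_shift d t p = (case d of Inl k \<Rightarrow> (fst p + t *\<^sub>R axis k 1, snd p)
                              | Inr k \<Rightarrow> (fst p, snd p + t *\<^sub>R axis k 1))"

definition fin_pd :: "('n::finite + 'n) \<Rightarrow> ((real^'n) \<times> (real^'n) \<Rightarrow> real) \<Rightarrow> (real^'n) \<times> (real^'n) \<Rightarrow> real" where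
  "fin_pd d \<phi> p = deriv (\<lambda>t. \<phi> (fin_shift d t p)) 0"

fun fin_ipd :: "('n::finite + 'n) list \<Rightarrow> ((real^'n) \<times> (real^'n) \<Rightarrow> real) \<Rightarrow> (real^'n) \<times> (real^'n) \<Rightarrow> real" where
  "fin_ipd [] \<phi> = \<phi>"
| "fin_ipd (d # ds) \<phi> = fin_pd d (fin_ipd ds \<phi>)"

definition fin_smooth_on :: "((real^'n::finite) \<times> (real^'n)) set \<Rightarrow> ((real^'n) \<times> (real^'n) \<Rightarrow> real) \<Rightarrow> bool" where
  "fin_smooth_on S \<phi> \<longleftrightarrow> open S \<and>
     (\<forall>ds. continuous_on S (fin_ipd ds \<phi>) \<and>
        (\<forall>d p. p \<in> S \<longrightarrow> ((\<lambda>t. fin_ipd ds \<phi> (fin_shift d t p)) has_real_derivative fin_ipd (d # ds) \<phi> p) (at 0)))"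

text \<open>Finsler quantities of a function L(x,y) (here used for the total space, dimension CARD('n)).\<close>
definition fin_g :: "(real^'n::finite \<Rightarrow> real^'n \<Rightarrow> real) \<Rightarrow> real^'n \<Rightarrow> real^'n \<Rightarrow> 'n \<Rightarrow> 'n \<Rightarrow> real" where
  "fin_g L x y i j = 1/2 * fin_ipd [Inr i, Inr j] (\<lambda>p. (L (fst p) (snd p))^2) (x, y)"

definition fin_C :: "(real^'n::finite \<Rightarrow> real^'n \<Rightarrow> real) \<Rightarrow> real^'n \<Rightarrow> real^'n \<Rightarrow> 'n \<Rightarrow> 'n \<Rightarrow> 'n \<Rightarrow> real" where
  "fin_C L x y i j k = 1/2 * fin_pd (Inr k) (\<lambda>p. fin_g L (fst p) (snd p) i j) (x, y)"

definition fin_gmat :: "(real^'n::finite \<Rightarrow> real^'n \<Rightarrow> real) \<Rightarrow> real^'n \<Rightarrow> real^'n \<Rightarrow> real^'n^'n" where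
  "fin_gmat L x y = (\<chi> i j. fin_g L x y i j)"

definition fin_I :: "(real^'n::finite \<Rightarrow> real^'n \<Rightarrow> real) \<Rightarrow> real^'n \<Rightarrow> real^'n \<Rightarrow> 'n \<Rightarrow> real" where
  "fin_I L x y i = (\<Sum>j\<in>UNIV. \<Sum>k\<in>UNIV. matrix_inv (fin_gmat L x y) $ j $ k * fin_C L x y i j k)"

definition fin_h :: "(real^'n::finite \<Rightarrow> real^'n \<Rightarrow> real) \<Rightarrow> real^'n \<Rightarrow> real^'n \<Rightarrow> 'n \<Rightarrow> 'n \<Rightarrow> real" where
  "fin_h L x y i j = fin_g L x y i j
     - 1 / (L x y)^2 * (\<Sum>p\<in>UNIV. fin_g L x y i p * y $ p) * (\<Sum>q\<in>UNIV. fin_g L x y j q * y $ q)"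

definition fin_M :: "(real^'n::finite \<Rightarrow> real^'n \<Rightarrow> real) \<Rightarrow> real^'n \<Rightarrow> real^'n \<Rightarrow> 'n \<Rightarrow> 'n \<Rightarrow> 'n \<Rightarrow> real" where
  "fin_M L x y i j k = fin_C L x y i j k
     - 1 / (real CARD('n) + 1) * (fin_I L x y i * fin_h L x y j k + fin_I L x y j * fin_h L x y i k
                                   + fin_I L x y k * fin_h L x y i j)"

definition C_reducible_on :: "((real^'n::finite) \<times> (real^'n)) set \<Rightarrow> (real^'n \<Rightarrow> real^'n \<Rightarrow> real) \<Rightarrow> bool" where
  "C_reducible_on D L \<longleftrightarrow> (\<forall>(x, y)\<in>D. \<forall>i j k. fin_M L x y i j k = 0)"

definition riemannian_on :: "((real^'n::finite) \<times> (real^'n)) set \<Rightarrow> (real^'n \<Rightarrow> real^'n \<Rightarrow> real) \<Rightarrow> bool" where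
  "riemannian_on D L \<longleftrightarrow> (\<forall>(x, y)\<in>D. \<forall>i j k. fin_C L x y i j k = 0)"

text \<open>Factor structure: a set B of coordinates (one factor).\<close>
definition depends_only :: "'n::finite set \<Rightarrow> (real^'n \<Rightarrow> real^'n \<Rightarrow> real) \<Rightarrow> bool" where
  "depends_only B L \<longleftrightarrow> (\<forall>x x' y y'. (\<forall>k\<in>B. x $ k = x' $ k \<and> y $ k = y' $ k) \<longrightarrow> L x y = L x' y')"

definition cyl_open :: "'n::finite set \<Rightarrow> (real^'n) set \<Rightarrow> bool" where
  "cyl_open B U \<longleftrightarrow> open U \<and> (\<forall>x x'. (\<forall>k\<in>B. x $ k = x' $ k) \<longrightarrow> (x \<in> U \<longleftrightarrow> x' \<in> U))"

definition nonzero_on :: "'n::finite set \<Rightarrow> real^'n \<Rightarrow> bool" where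
  "nonzero_on B y \<longleftrightarrow> (\<exists>k\<in>B. y $ k \<noteq> 0)"

definition finsler_factor :: "'n::finite set \<Rightarrow> (real^'n) set \<Rightarrow> (real^'n \<Rightarrow> real^'n \<Rightarrow> real) \<Rightarrow> bool" where
  "finsler_factor B U L \<longleftrightarrow> cyl_open B U \<and> depends_only B L \<and>
     fin_smooth_on {p. fst p \<in> U \<and> nonzero_on B (snd p)} (\<lambda>p. L (fst p) (snd p)) \<and>
     (\<forall>x y. x \<in> U \<and> nonzero_on B y \<longrightarrow>
        L x y > 0 \<and> (\<forall>c>0. L x (c *\<^sub>R y) = c * L x y) \<and>
        (\<forall>v. nonzero_on B v \<longrightarrow> (\<Sum>j\<in>B. \<Sum>k\<in>B. fin_g L x y j k * v $ j * v $ k) > 0))"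

definition twist_function :: "'n::finite set \<Rightarrow> 'n set \<Rightarrow> (real^'n) set \<Rightarrow> (real^'n) set \<Rightarrow> (real^'n \<Rightarrow> real) \<Rightarrow> bool" where
  "twist_function B0 Bi U0 Ui f \<longleftrightarrow>
     depends_only (B0 \<union> Bi) (\<lambda>x y. f x) \<and>
     fin_smooth_on {p. fst p \<in> U0 \<inter> Ui} (\<lambda>p. f (fst p)) \<and>
     (\<forall>x \<in> U0 \<inter> Ui. f x > 0)"

definition twisted_F :: "nat \<Rightarrow> (nat \<Rightarrow> real^'n::finite \<Rightarrow> real^'n \<Rightarrow> real) \<Rightarrow> (nat \<Rightarrow> real^'n \<Rightarrow> real) \<Rightarrow> real^'n \<Rightarrow> real^'n \<Rightarrow> real" where
  "twisted_F b Fs f x y = sqrt ((Fs 0 x y)^2 + (\<Sum>i\<in>{1..b}. (f i x)^2 * (Fs i x y)^2))"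

definition product_domain :: "('n::finite \<Rightarrow> nat) \<Rightarrow> nat \<Rightarrow> (nat \<Rightarrow> (real^'n) set) \<Rightarrow> ((real^'n) \<times> (real^'n)) set" where
  "product_domain blk b U = {(x, y). \<forall>i\<le>b. x \<in> U i \<and> nonzero_on {k. blk k = i} y}"

end

theory Submission
  imports Defs
begin


definition hasd :: "('n::finite + 'n) \<Rightarrow> ((real^'n) \<times> (real^'n) \<Rightarrow> real) \<Rightarrow> (real^'n) \<times> (real^'n) \<Rightarrow> real \<Rightarrow> bool" where
 "hasd d u p D \<longleftrightarrow> ((\<lambda>t. u (fin_shift d t p)) has_real_derivative D) (at 0)"

lemma shift0[simp]: "fin_shift d 0 p = p"
  by (cases d) (auto simp: fin_shift_def)

lemma shift_comm: "fin_shift d t (fin_shift e s p) = fin_shift e s (fin_shift d t p)"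
  by (cases d; cases e) (auto simp: fin_shift_def algebra_simps)

lemma shift_add: "fin_shift d t (fin_shift d s p) = fin_shift d (s+t) p"
  by (cases d) (auto simp: fin_shift_def algebra_simps)

lemma shift_Inr[simp]: "fin_shift (Inr k) t p = (fst p, snd p + t *\<^sub>R axis k 1)"
  by (simp add: fin_shift_def)

lemma hasd_pd: "hasd d u p D \<Longrightarrow> fin_pd d u p = D"
  unfolding hasd_def fin_pd_def by (rule DERIV_imp_deriv)

lemma hasd_mult: "hasd d u p Du \<Longrightarrow> hasd d v p Dv \<Longrightarrow> hasd d (\<lambda>q. u q * v q) p (Du * v p + u p * Dv)"
  unfolding hasd_def by (drule (1) DERIV_mult) (simp add: mult.commute)

lemma hasd_add: "hasd d u p Du \<Longrightarrow> hasd d v p Dv \<Longrightarrow> hasd d (\<lambda>q. u q + v q) p (Du + Dv)"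
  unfolding hasd_def by (rule DERIV_add)

lemma hasd_const: "hasd d (\<lambda>q. c) p 0"
  unfolding hasd_def by simp

lemma hasd_cmult: "hasd d u p Du \<Longrightarrow> hasd d (\<lambda>q. c * u q) p (c * Du)"
  unfolding hasd_def by (rule DERIV_cmult)

lemma hasd_sum: "finite A \<Longrightarrow> (\<And>i. i \<in> A \<Longrightarrow> hasd d (u i) p (Du i)) \<Longrightarrow> hasd d (\<lambda>q. \<Sum>i\<in>A. u i q) p (\<Sum>i\<in>A. Du i)"
  unfolding hasd_def by (rule DERIV_sum)

lemma hasd_fst: "hasd (Inr k) (\<lambda>q. w (fst q)) p 0"
  unfolding hasd_def by simp

lemma hasd_snd: "hasd (Inr d) (\<lambda>q. snd q $ b) p (if b = d then 1 else 0)"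
proof -
  have "((\<lambda>t. snd p $ b + t * (axis d 1 $ b)) has_real_derivative (axis d (1::real) $ b)) (at 0)"
    by (auto intro!: derivative_eq_intros)
  then show ?thesis unfolding hasd_def by (simp add: axis_def)
qed

lemma cont_shift: "continuous (at t) (\<lambda>t. fin_shift d t p)"
  by (cases d) (auto simp: fin_shift_def intro!: continuous_intros)

lemma hasd_local:
  assumes "open S" "p \<in> S" "\<And>q. q \<in> S \<Longrightarrow> u q = v q" "hasd d v p D"
  shows "hasd d u p D"
proof -
  have "eventually (\<lambda>t. fin_shift d t p \<in> S) (nhds 0)"
  proof -
    have "open ((\<lambda>t. fin_shift d t p) -` S)"
      using assms(1) by (rule continuous_open_vimage) (rule cont_shift)
    moreover have "0 \<in> (\<lambda>t. fin_shift d t p) -` S" using assms(2) by simp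
    ultimately show ?thesis using eventually_nhds_in_open by fastforce
  qed
  then have "eventually (\<lambda>t. u (fin_shift d t p) = v (fin_shift d t p)) (nhds 0)"
    by eventually_elim (use assms(3) in auto)
  then show ?thesis using assms(4) unfolding hasd_def
    by (subst DERIV_cong_ev[where g="\<lambda>t. v (fin_shift d t p)"]) auto
qed

lemma smooth_hasd: "fin_smooth_on S \<Phi> \<Longrightarrow> p \<in> S \<Longrightarrow> hasd d (fin_ipd ds \<Phi>) p (fin_ipd (d # ds) \<Phi> p)"
  unfolding fin_smooth_on_def hasd_def by blast

lemma smooth_open: "fin_smooth_on S \<Phi> \<Longrightarrow> open S"
  unfolding fin_smooth_on_def by blast

lemma smooth_cont: "fin_smooth_on S \<Phi> \<Longrightarrow> continuous_on S (fin_ipd ds \<Phi>)"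
  unfolding fin_smooth_on_def by blast

lemma inv_pd0:
  assumes "\<And>q s. \<phi> (fin_shift a s q) = \<phi> q"
  shows "fin_pd a \<phi> p = 0"
  unfolding fin_pd_def using assms by simp

lemma inv_pd:
  assumes "\<And>q s. \<phi> (fin_shift a s q) = \<phi> q"
  shows "fin_pd d \<phi> (fin_shift a s p) = fin_pd d \<phi> p"
  unfolding fin_pd_def by (simp add: shift_comm[of d _ a] assms)

lemma deriv_add_inv: "deriv (\<lambda>t. c + h t) x = deriv h x"
proof -
  have "DERIV (\<lambda>t. c + h t) x :> D \<longleftrightarrow> DERIV h x :> D" for D
  proof
    assume "DERIV (\<lambda>t. c + h t) x :> D"
    from DERIV_add[OF this DERIV_const[of "-c"]] show "DERIV h x :> D" by simp
  next
    assume "DERIV h x :> D"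
    from DERIV_add[OF DERIV_const[of c] this] show "DERIV (\<lambda>t. c + h t) x :> D" by simp
  qed
  then show ?thesis unfolding deriv_def by simp
qed



lemma cont_ball_bound:
  fixes P :: "real^'n::finite \<Rightarrow> real"
  assumes "open T" "y \<in> T" "continuous_on T P" "e > 0"
  shows "\<exists>d>0. \<forall>z. dist z y < d \<longrightarrow> z \<in> T \<and> \<bar>P z - P y\<bar> < e"
proof -
  have "isCont P y" using assms continuous_on_eq_continuous_at by blast
  then obtain d1 where d1: "d1 > 0" "\<And>z. dist z y < d1 \<Longrightarrow> dist (P z) (P y) < e"
    using assms(4) unfolding continuous_at_eps_delta by blast
  obtain d2 where d2: "d2 > 0" "ball y d2 \<subseteq> T" using assms(1,2) openE by blast
  show ?thesis
    by (rule exI[of _ "min d1 d2"]) (use d1 d2 in \<open>auto simp: dist_real_def dist_commute\<close>)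
qed

lemma chain_step:
  fixes \<phi> :: "real^'n::finite \<Rightarrow> real" and Pk :: "real^'n \<Rightarrow> real"
  assumes T: "open T" "y \<in> T"
    and der: "\<And>z. z \<in> T \<Longrightarrow> ((\<lambda>s. \<phi> (z + s *\<^sub>R axis k 1)) has_real_derivative Pk z) (at 0)"
    and cont: "continuous_on T Pk"
    and IH: "((\<lambda>t. \<phi> (y + t *\<^sub>R w)) has_real_derivative Dw) (at 0)"
  shows "((\<lambda>t. \<phi> (y + t *\<^sub>R (w + c *\<^sub>R axis k 1))) has_real_derivative (Dw + c * Pk y)) (at 0)"
proof -
  define R where "R t = \<phi> (y + t *\<^sub>R w + (t * c) *\<^sub>R axis k 1) - \<phi> (y + t *\<^sub>R w)" for t
  have R0: "R 0 = 0" by (simp add: R_def)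
  have "((\<lambda>t. (R t - R 0) / (t - 0)) \<longlongrightarrow> c * Pk y) (at 0)"
  proof (rule LIM_I)
    fix r :: real assume "r > 0"
    define B where "B = (r/2) / (\<bar>c\<bar> + 1)"
    have "B > 0" using \<open>r > 0\<close> by (simp add: B_def)
    obtain d1 where d1: "d1 > 0" "\<And>z. dist z y < d1 \<Longrightarrow> z \<in> T \<and> \<bar>Pk z - Pk y\<bar> < B"
      using cont_ball_bound[OF T cont \<open>B > 0\<close>] by blast
    define s where "s = d1 / (norm w + \<bar>c\<bar> + 1)"
    have pos: "norm w + \<bar>c\<bar> + 1 > 0" by (smt (verit) norm_ge_zero abs_ge_zero)
    have "s > 0" using d1 pos by (simp add: s_def)
    show "\<exists>s>0. \<forall>x. x \<noteq> 0 \<and> norm (x - 0) < s \<longrightarrow> norm ((R x - R 0) / (x - 0) - c * Pk y) < r"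
    proof (intro exI[of _ s] conjI allI impI)
      show "s > 0" by fact
      fix t :: real assume t: "t \<noteq> 0 \<and> norm (t - 0) < s"
      define base where "base = y + t *\<^sub>R w"
      define \<rho> where "\<rho> = \<bar>t * c\<bar>"
      define h where "h \<sigma> = \<phi> (base + \<sigma> *\<^sub>R axis k 1) - \<sigma> * Pk y" for \<sigma>
      have close: "dist (base + \<sigma> *\<^sub>R axis k 1) y < d1" if "\<sigma> \<in> {-\<rho>..\<rho>}" for \<sigma>
      proof -
        have "dist (base + \<sigma> *\<^sub>R axis k 1) y = norm (t *\<^sub>R w + \<sigma> *\<^sub>R axis k 1)"
          by (simp add: base_def dist_norm)
        also have "\<dots> \<le> \<bar>t\<bar> * norm w + \<bar>\<sigma>\<bar>"
          by (rule order_trans[OF norm_triangle_ineq]) (simp add: abs_mult)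
        also have "\<dots> \<le> \<bar>t\<bar> * norm w + \<bar>t\<bar> * \<bar>c\<bar>"
          using that by (simp add: \<rho>_def abs_mult abs_le_iff)
        also have "\<dots> < s * (norm w + \<bar>c\<bar> + 1)"
        proof -
          have "\<bar>t\<bar> * (norm w + \<bar>c\<bar>) \<le> \<bar>t\<bar> * (norm w + \<bar>c\<bar> + 1)" by (simp add: mult_left_mono)
          also have "\<dots> < s * (norm w + \<bar>c\<bar> + 1)"
            using t pos by (intro mult_strict_right_mono) auto
          finally show ?thesis by (simp add: algebra_simps)
        qed
        also have "\<dots> = d1" using pos by (simp add: s_def)
        finally show ?thesis .
      qed
      have hder: "(h has_field_derivative (Pk (base + \<sigma> *\<^sub>R axis k 1) - Pk y)) (at \<sigma> within {-\<rho>..\<rho>})"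
        if "\<sigma> \<in> {-\<rho>..\<rho>}" for \<sigma>
      proof -
        have inT: "base + \<sigma> *\<^sub>R axis k 1 \<in> T" using d1(2)[OF close[OF that]] by blast
        have "((\<lambda>x. \<phi> (base + (x + \<sigma>) *\<^sub>R axis k 1)) has_real_derivative Pk (base + \<sigma> *\<^sub>R axis k 1)) (at 0)"
          using der[OF inT] by (simp add: algebra_simps scaleR_add_left)
        then have "((\<lambda>x. \<phi> (base + x *\<^sub>R axis k 1)) has_real_derivative Pk (base + \<sigma> *\<^sub>R axis k 1)) (at (0 + \<sigma>))"
          by (subst DERIV_shift) simp
        then have "((\<lambda>x. \<phi> (base + x *\<^sub>R axis k 1)) has_real_derivative Pk (base + \<sigma> *\<^sub>R axis k 1)) (at \<sigma>)"
          by simp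
        then have "(h has_field_derivative (Pk (base + \<sigma> *\<^sub>R axis k 1) - Pk y)) (at \<sigma>)"
          unfolding h_def by (auto intro!: derivative_eq_intros)
        then show ?thesis by (rule has_field_derivative_at_within)
      qed
      have hb: "norm (Pk (base + \<sigma> *\<^sub>R axis k 1) - Pk y) \<le> B" if "\<sigma> \<in> {-\<rho>..\<rho>}" for \<sigma>
        using d1(2)[OF close[OF that]] by simp
      have "norm (h (t * c) - h 0) \<le> B * norm (t * c - 0)"
        by (rule field_differentiable_bound[OF convex_real_interval(5) hder hb]) (auto simp: \<rho>_def)
      moreover have "h (t * c) - h 0 = R t - t * (c * Pk y)"
        by (simp add: h_def R_def base_def algebra_simps)
      ultimately have "\<bar>R t - t * (c * Pk y)\<bar> \<le> B * (\<bar>t\<bar> * \<bar>c\<bar>)" by (simp add: abs_mult)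
      then have "\<bar>(R t - t * (c * Pk y)) / t\<bar> \<le> B * \<bar>c\<bar>"
        using t by (simp add: divide_simps abs_mult mult.commute mult.left_commute)
      moreover have "(R t - t * (c * Pk y)) / t = R t / t - c * Pk y" using t by (simp add: divide_simps)
      moreover have "B * \<bar>c\<bar> < r"
      proof -
        have "B * \<bar>c\<bar> \<le> B * (\<bar>c\<bar> + 1)" using \<open>B > 0\<close> by simp
        also have "\<dots> = r / 2" unfolding B_def by (smt (verit) nonzero_mult_div_cancel_right abs_ge_zero times_divide_eq_left)
        finally show ?thesis using \<open>r > 0\<close> by simp
      qed
      ultimately show "norm ((R t - R 0) / (t - 0) - c * Pk y) < r" by (simp add: R0)
    qed
  qed
  then have "(R has_real_derivative c * Pk y) (at 0)" by (simp add: has_field_derivative_iff)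
  from DERIV_add[OF this IH] show ?thesis
    by (simp add: R_def algebra_simps scaleR_add_right)
qed



lemma chain_ray:
  fixes \<phi> :: "real^'n::finite \<Rightarrow> real" and P :: "'n \<Rightarrow> real^'n \<Rightarrow> real"
  assumes T: "open T" "y \<in> T"
    and der: "\<And>b z. z \<in> T \<Longrightarrow> ((\<lambda>s. \<phi> (z + s *\<^sub>R axis b 1)) has_real_derivative P b z) (at 0)"
    and cont: "\<And>b. continuous_on T (P b)"
  shows "((\<lambda>t. \<phi> (y + t *\<^sub>R v)) has_real_derivative (\<Sum>b\<in>UNIV. v$b * P b y)) (at 0)"
proof -
  have "\<forall>v. (\<forall>i. i \<notin> K \<longrightarrow> v$i = 0) \<longrightarrow> ((\<lambda>t. \<phi> (y + t *\<^sub>R v)) has_real_derivative (\<Sum>b\<in>K. v$b * P b y)) (at 0)"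
    if "finite K" for K
    using that
  proof (induction K rule: finite_induct)
    case empty
    show ?case
    proof (intro allI impI)
      fix v :: "real^'n" assume "\<forall>i. i \<notin> {} \<longrightarrow> v$i = 0"
      then have "v = 0" by (simp add: vec_eq_iff)
      then show "((\<lambda>t. \<phi> (y + t *\<^sub>R v)) has_real_derivative (\<Sum>b\<in>{}. v$b * P b y)) (at 0)" by simp
    qed
  next
    case (insert k K)
    show ?case
    proof (intro allI impI)
      fix v :: "real^'n" assume v: "\<forall>i. i \<notin> insert k K \<longrightarrow> v$i = 0"
      define w where "w = v - (v$k) *\<^sub>R axis k 1"
      have w: "\<forall>i. i \<notin> K \<longrightarrow> w$i = 0" using v by (auto simp: w_def axis_def)
      have vw: "v = w + (v$k) *\<^sub>R axis k 1" by (simp add: w_def)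
      have "(\<Sum>b\<in>K. w$b * P b y) = (\<Sum>b\<in>K. v$b * P b y)"
        using insert(2) by (intro sum.cong) (auto simp: w_def axis_def)
      then have sumeq: "(\<Sum>b\<in>insert k K. v$b * P b y) = (\<Sum>b\<in>K. w$b * P b y) + v$k * P k y"
        using insert(1,2) by simp
      show "((\<lambda>t. \<phi> (y + t *\<^sub>R v)) has_real_derivative (\<Sum>b\<in>insert k K. v$b * P b y)) (at 0)"
        unfolding sumeq
      proof -
        have cs: "((\<lambda>t. \<phi> (y + t *\<^sub>R (w + v$k *\<^sub>R axis k 1))) has_real_derivative (\<Sum>b\<in>K. w$b * P b y) + v$k * P k y) (at 0)"
          by (rule chain_step[OF T der cont insert(3)[rule_format, OF w[rule_format]]])
        have "w + v$k *\<^sub>R axis k 1 = v" by (simp add: w_def)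
        then show "((\<lambda>t. \<phi> (y + t *\<^sub>R v)) has_real_derivative (\<Sum>b\<in>K. w$b * P b y) + v$k * P k y) (at 0)"
          using cs by (simp only:)
      qed
    qed
  qed
  from this[of UNIV] show ?thesis by simp
qed

definition scinv :: "((real^'n::finite) \<times> (real^'n)) set \<Rightarrow> bool" where
  "scinv S \<longleftrightarrow> (\<forall>x y c. (x, y) \<in> S \<longrightarrow> c > 0 \<longrightarrow> (x, c *\<^sub>R y) \<in> S)"

definition homog :: "((real^'n::finite) \<times> (real^'n)) set \<Rightarrow> ((real^'n) \<times> (real^'n) \<Rightarrow> real) \<Rightarrow> real \<Rightarrow> bool" where
  "homog S \<psi> r \<longleftrightarrow> (\<forall>x y c. (x, y) \<in> S \<longrightarrow> c > 0 \<longrightarrow> \<psi> (x, c *\<^sub>R y) = c powr r * \<psi> (x, y))"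

lemma euler:
  assumes sm: "fin_smooth_on S \<Phi>" and hom: "homog S (fin_ipd ds \<Phi>) r" and p: "(x, y) \<in> S"
  shows "(\<Sum>b\<in>UNIV. y$b * fin_ipd (Inr b # ds) \<Phi> (x, y)) = r * fin_ipd ds \<Phi> (x, y)"
proof -
  define T where "T = Pair x -` S"
  have oS: "open S" using sm by (rule smooth_open)
  have oT: "open T" unfolding T_def
    by (rule continuous_open_vimage[OF oS]) (auto intro!: continuous_intros)
  have yT: "y \<in> T" using p by (simp add: T_def)
  have der: "((\<lambda>s. fin_ipd ds \<Phi> (x, z + s *\<^sub>R axis b 1)) has_real_derivative fin_ipd (Inr b # ds) \<Phi> (x, z)) (at 0)"
    if "z \<in> T" for b z
    using smooth_hasd[OF sm, of "(x, z)" "Inr b" ds] that by (simp add: T_def hasd_def)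
  have cont: "continuous_on T (\<lambda>z. fin_ipd (Inr b # ds) \<Phi> (x, z))" for b
  proof -
    have "continuous_on T (Pair x)" by (auto intro!: continuous_intros)
    moreover have "Pair x ` T \<subseteq> S" by (auto simp: T_def)
    ultimately show ?thesis
      using continuous_on_compose2[OF smooth_cont[OF sm, of "Inr b # ds"]] by blast
  qed
  have d1: "((\<lambda>t. fin_ipd ds \<Phi> (x, y + t *\<^sub>R y)) has_real_derivative (\<Sum>b\<in>UNIV. y$b * fin_ipd (Inr b # ds) \<Phi> (x, y))) (at 0)"
    using chain_ray[OF oT yT der cont] .
  have ev: "eventually (\<lambda>t. fin_ipd ds \<Phi> (x, y + t *\<^sub>R y) = (1 + t) powr r * fin_ipd ds \<Phi> (x, y)) (nhds 0)"
  proof -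
    have "eventually (\<lambda>t. t \<in> {-1<..}) (nhds (0::real))"
      by (rule eventually_nhds_in_open) auto
    then show ?thesis
    proof eventually_elim
      case (elim t)
      then have "1 + t > 0" by simp
      have "y + t *\<^sub>R y = (1 + t) *\<^sub>R y" by (simp add: algebra_simps)
      then show ?case using hom p \<open>1 + t > 0\<close> unfolding homog_def by simp
    qed
  qed
  have d2: "((\<lambda>t. (1 + t) powr r * fin_ipd ds \<Phi> (x, y)) has_real_derivative r * fin_ipd ds \<Phi> (x, y)) (at 0)"
    by (rule derivative_eq_intros refl | simp)+
  have d3: "((\<lambda>t. fin_ipd ds \<Phi> (x, y + t *\<^sub>R y)) has_real_derivative r * fin_ipd ds \<Phi> (x, y)) (at 0)"
    using DERIV_cong_ev[OF refl ev refl] d2 by simp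
  show ?thesis using DERIV_unique[OF d1 d3] .
qed

lemma homog_step:
  assumes sm: "fin_smooth_on S \<Phi>" and sc: "scinv S" and hom: "homog S (fin_ipd ds \<Phi>) r"
  shows "homog S (fin_ipd (Inr b # ds) \<Phi>) (r - 1)"
  unfolding homog_def
proof (intro allI impI)
  fix x y and c :: real assume p: "(x, y) \<in> S" and cpos: "c > 0"
  let ?\<psi> = "fin_ipd ds \<Phi>"
  have oS: "open S" using sm by (rule smooth_open)
  have pc: "(x, c *\<^sub>R y) \<in> S" using sc p cpos unfolding scinv_def by blast
  have D1: "((\<lambda>s. ?\<psi> (x, c *\<^sub>R y + s *\<^sub>R axis b 1)) has_real_derivative fin_ipd (Inr b # ds) \<Phi> (x, c *\<^sub>R y)) (at 0)"
    using smooth_hasd[OF sm pc, of "Inr b" ds] by (simp add: hasd_def)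
  have D0: "((\<lambda>s. ?\<psi> (x, y + s *\<^sub>R axis b 1)) has_real_derivative fin_ipd (Inr b # ds) \<Phi> (x, y)) (at 0)"
    using smooth_hasd[OF sm p, of "Inr b" ds] by (simp add: hasd_def)
  have D0': "((\<lambda>s. ?\<psi> (x, y + (s / c) *\<^sub>R axis b 1)) has_real_derivative fin_ipd (Inr b # ds) \<Phi> (x, y) * (1 / c)) (at 0)"
  proof -
    have "((\<lambda>s. s / c) has_real_derivative 1 / c) (at 0)" using cpos by (auto intro!: derivative_eq_intros)
    from DERIV_chain2[OF _ this, of "\<lambda>s. ?\<psi> (x, y + s *\<^sub>R axis b 1)"] D0 show ?thesis by simp
  qed
  have D2: "((\<lambda>s. c powr r * ?\<psi> (x, y + (s / c) *\<^sub>R axis b 1)) has_real_derivative c powr r * (fin_ipd (Inr b # ds) \<Phi> (x, y) * (1 / c))) (at 0)"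
    using DERIV_cmult[OF D0'] .
  have ev: "eventually (\<lambda>s. ?\<psi> (x, c *\<^sub>R y + s *\<^sub>R axis b 1) = c powr r * ?\<psi> (x, y + (s / c) *\<^sub>R axis b 1)) (nhds 0)"
  proof -
    have "open ((\<lambda>s. (x, y + (s / c) *\<^sub>R axis b 1)) -` S)"
      by (rule continuous_open_vimage[OF oS]) (use cpos in \<open>auto intro!: continuous_intros\<close>)
    moreover have "0 \<in> (\<lambda>s. (x, y + (s / c) *\<^sub>R axis b 1)) -` S" using p by simp
    ultimately have "eventually (\<lambda>s. s \<in> (\<lambda>s. (x, y + (s / c) *\<^sub>R axis b 1)) -` S) (nhds 0)"
      by (rule eventually_nhds_in_open)
    then show ?thesis
    proof eventually_elim
      case (elim s)
      have "c *\<^sub>R y + s *\<^sub>R axis b 1 = c *\<^sub>R (y + (s / c) *\<^sub>R axis b 1)"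
        using cpos by (simp add: algebra_simps)
      then show ?case using hom elim cpos unfolding homog_def by simp
    qed
  qed
  have D3: "((\<lambda>s. ?\<psi> (x, c *\<^sub>R y + s *\<^sub>R axis b 1)) has_real_derivative c powr r * (fin_ipd (Inr b # ds) \<Phi> (x, y) * (1 / c))) (at 0)"
    using DERIV_cong_ev[OF refl ev refl] D2 by simp
  have "fin_ipd (Inr b # ds) \<Phi> (x, c *\<^sub>R y) = c powr r * (fin_ipd (Inr b # ds) \<Phi> (x, y) * (1 / c))"
    using DERIV_unique[OF D1 D3] .
  also have "\<dots> = c powr (r - 1) * fin_ipd (Inr b # ds) \<Phi> (x, y)"
    using cpos by (simp add: powr_diff)
  finally show "fin_ipd (Inr b # ds) \<Phi> (x, c *\<^sub>R y) = c powr (r - 1) * fin_ipd (Inr b # ds) \<Phi> (x, y)" .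
qed



locale twp =
  fixes blk :: "'n::finite \<Rightarrow> nat" and b :: nat
    and U :: "nat \<Rightarrow> (real^'n) set"
    and Fs :: "nat \<Rightarrow> real^'n \<Rightarrow> real^'n \<Rightarrow> real"
    and f :: "nat \<Rightarrow> real^'n \<Rightarrow> real"
  assumes b1: "b \<ge> 1"
    and blk_le: "\<forall>k. blk k \<le> b"
    and fac: "\<forall>i\<le>b. finsler_factor {k. blk k = i} (U i) (Fs i)"
    and tw: "\<forall>i\<in>{1..b}. twist_function {k. blk k = 0} {k. blk k = i} (U 0) (U i) (f i)"
begin

definition "Phi j = (\<lambda>p. Fs j (fst p) (snd p))"
definition "SS j = {p. fst p \<in> U j \<and> nonzero_on {k. blk k = j} (snd p)}"
definition "wt j x = (if j = 0 then 1 else (f j x)^2)"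
definition "TT j = (\<lambda>p. wt j (fst p) * (Phi j p * Phi j p))"
definition "gfun a c = (\<lambda>p. fin_g (twisted_F b Fs f) (fst p) (snd p) a c)"

lemma blk_le': "blk k \<le> b" using blk_le by blast

lemma smooth: "j \<le> b \<Longrightarrow> fin_smooth_on (SS j) (Phi j)"
  using fac unfolding finsler_factor_def SS_def Phi_def by blast

lemma SS_open: "j \<le> b \<Longrightarrow> open (SS j)"
  using smooth smooth_open by blast

lemma SS_scinv: "scinv (SS j)"
  unfolding scinv_def SS_def nonzero_on_def by auto

lemma Phi_pos: "j \<le> b \<Longrightarrow> p \<in> SS j \<Longrightarrow> Phi j p > 0"
  using fac unfolding finsler_factor_def SS_def Phi_def by (cases p) auto

lemma Phi_homog: "j \<le> b \<Longrightarrow> homog (SS j) (fin_ipd [] (Phi j)) 1"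
  using fac unfolding finsler_factor_def SS_def Phi_def homog_def by auto

lemma dep: "j \<le> b \<Longrightarrow> depends_only {k. blk k = j} (Fs j)"
  using fac unfolding finsler_factor_def by blast

lemma Phi_inv: assumes "j \<le> b" "blk k \<noteq> j"
  shows "Phi j (fin_shift (Inr k) s q) = Phi j q"
proof -
  have "\<forall>k'\<in>{k. blk k = j}. fst q $ k' = fst q $ k' \<and> (snd q + s *\<^sub>R axis k 1) $ k' = snd q $ k'"
    using assms(2) by (auto simp: axis_def)
  then show ?thesis using dep[OF assms(1)] unfolding depends_only_def Phi_def
    by (simp only: shift_Inr fst_conv snd_conv)
qed

lemma TT_inv: assumes "j \<le> b" "blk k \<noteq> j"
  shows "TT j (fin_shift (Inr k) s q) = TT j q"
  using Phi_inv[OF assms] by (simp add: TT_def)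

lemma sq: "(twisted_F b Fs f x y)^2 = (\<Sum>i\<in>{..b}. TT i (x, y))"
proof -
  have nn: "0 \<le> (Fs 0 x y)^2 + (\<Sum>i\<in>{1..b}. (f i x)^2 * (Fs i x y)^2)"
    by (intro add_nonneg_nonneg sum_nonneg) auto
  have "{..b} = insert 0 {1..b}" by auto
  then have "(\<Sum>i\<in>{..b}. TT i (x, y)) = TT 0 (x, y) + (\<Sum>i\<in>{1..b}. TT i (x, y))" by simp
  also have "\<dots> = (Fs 0 x y)^2 + (\<Sum>i\<in>{1..b}. (f i x)^2 * (Fs i x y)^2)"
    by (auto simp: TT_def wt_def Phi_def power2_eq_square intro!: sum.cong)
  finally show ?thesis using nn unfolding twisted_F_def by simp
qed

lemma sqfun: "(\<lambda>p. (twisted_F b Fs f (fst p) (snd p))^2) = (\<lambda>p. \<Sum>i\<in>{..b}. TT i p)"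
  using sq by auto

lemma pd_sum: "fin_pd (Inr c) (\<lambda>p. \<Sum>i\<in>{..b}. TT i p) = fin_pd (Inr c) (TT (blk c))"
proof
  fix p
  let ?j = "blk c"
  have j: "?j \<in> {..b}" using blk_le' by simp
  have "(\<lambda>t. \<Sum>i\<in>{..b}. TT i (fin_shift (Inr c) t p))
       = (\<lambda>t. (\<Sum>i\<in>{..b} - {?j}. TT i p) + TT ?j (fin_shift (Inr c) t p))"
  proof
    fix t
    have "(\<Sum>i\<in>{..b}. TT i (fin_shift (Inr c) t p)) = TT ?j (fin_shift (Inr c) t p) + (\<Sum>i\<in>{..b} - {?j}. TT i (fin_shift (Inr c) t p))"
      using j by (simp add: sum.remove)
    also have "(\<Sum>i\<in>{..b} - {?j}. TT i (fin_shift (Inr c) t p)) = (\<Sum>i\<in>{..b} - {?j}. TT i p)"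
      by (intro sum.cong refl TT_inv) auto
    finally show "(\<Sum>i\<in>{..b}. TT i (fin_shift (Inr c) t p)) = (\<Sum>i\<in>{..b} - {?j}. TT i p) + TT ?j (fin_shift (Inr c) t p)"
      by simp
  qed
  then show "fin_pd (Inr c) (\<lambda>p. \<Sum>i\<in>{..b}. TT i p) p = fin_pd (Inr c) (TT ?j) p"
    unfolding fin_pd_def by (simp add: deriv_add_inv)
qed

lemma gfun_glob: "gfun a c = (\<lambda>p. 1/2 * fin_pd (Inr a) (fin_pd (Inr c) (TT (blk c))) p)"
  unfolding gfun_def fin_g_def by (simp add: sqfun pd_sum)

lemma pdTT_inv: assumes "blk e \<noteq> blk c"
  shows "fin_pd (Inr c) (TT (blk c)) (fin_shift (Inr e) s q) = fin_pd (Inr c) (TT (blk c)) q"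
  by (rule inv_pd) (use TT_inv[OF blk_le' assms] in auto)

lemma gfun_zero: "blk a \<noteq> blk c \<Longrightarrow> gfun a c p = 0"
  unfolding gfun_glob by (simp add: inv_pd0[OF pdTT_inv])

lemma gfun_inv: assumes "blk e \<noteq> blk c" shows "gfun a c (fin_shift (Inr e) s q) = gfun a c q"
proof -
  have "fin_pd (Inr a) (fin_pd (Inr c) (TT (blk c))) (fin_shift (Inr e) s q) = fin_pd (Inr a) (fin_pd (Inr c) (TT (blk c))) q"
    by (rule inv_pd) (rule pdTT_inv[OF assms])
  then show ?thesis unfolding gfun_glob by (simp del: shift_Inr)
qed

lemma C_gfun: "fin_C (twisted_F b Fs f) x y a c e = 1/2 * fin_pd (Inr e) (gfun a c) (x, y)"
  unfolding fin_C_def gfun_def by simp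

lemma C_zero: "blk a \<noteq> blk c \<or> blk e \<noteq> blk c \<Longrightarrow> fin_C (twisted_F b Fs f) x y a c e = 0"
proof -
  assume h: "blk a \<noteq> blk c \<or> blk e \<noteq> blk c"
  show ?thesis
  proof (cases "blk a \<noteq> blk c")
    case True
    then have "gfun a c = (\<lambda>p. 0)" using gfun_zero by auto
    then show ?thesis unfolding C_gfun fin_pd_def by simp
  next
    case False
    then have "blk e \<noteq> blk c" using h by simp
    then show ?thesis unfolding C_gfun by (subst inv_pd0[where a="Inr e"]) (rule gfun_inv, auto)
  qed
qed

end


lemma hasd_eq: "hasd d u p D \<Longrightarrow> D = D' \<Longrightarrow> hasd d u p D'" by simp

lemma hasd_unique: "hasd d u p D1 \<Longrightarrow> hasd d u p D2 \<Longrightarrow> D1 = D2"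
  unfolding hasd_def by (rule DERIV_unique)

lemma sum_delta_mult: fixes g :: "'n::finite \<Rightarrow> real" shows "(\<Sum>a\<in>UNIV. (if a = d then 1 else 0) * g a) = g d"
proof -
  have "\<And>a. (if a = d then 1 else 0) * g a = (if a = d then g d else 0)" by simp
  then show ?thesis by (simp only:) (subst sum.delta, auto)
qed

context twp begin

definition "P1 j a = fin_ipd [Inr a] (Phi j)"
definition "P2 j a c = fin_ipd [Inr a, Inr c] (Phi j)"

lemma hasd_Phi0: "j \<le> b \<Longrightarrow> q \<in> SS j \<Longrightarrow> hasd (Inr a) (Phi j) q (P1 j a q)"
  using smooth_hasd[OF smooth, of j q "Inr a" "[]"] by (simp add: P1_def)

lemma hasd_P1: "j \<le> b \<Longrightarrow> q \<in> SS j \<Longrightarrow> hasd (Inr a) (P1 j c) q (P2 j a c q)"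
  using smooth_hasd[OF smooth, of j q "Inr a" "[Inr c]"] by (simp add: P1_def P2_def)

lemma hasd_P2: "j \<le> b \<Longrightarrow> q \<in> SS j \<Longrightarrow> \<exists>V. hasd (Inr d) (P2 j a c) q V"
  using smooth_hasd[OF smooth, of j q "Inr d" "[Inr a, Inr c]"] unfolding P2_def by blast

lemma P1_zero: "j \<le> b \<Longrightarrow> blk c \<noteq> j \<Longrightarrow> P1 j c q = 0"
  unfolding P1_def by (simp add: inv_pd0 Phi_inv del: shift_Inr)

lemma P2_zero: assumes "j \<le> b" "blk c \<noteq> j" shows "P2 j a c q = 0"
proof -
  have "fin_pd (Inr c) (Phi j) = (\<lambda>q. 0)" by (rule ext) (simp add: inv_pd0 Phi_inv assms del: shift_Inr)
  then show ?thesis unfolding P2_def by (simp only: fin_ipd.simps) (simp add: fin_pd_def)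
qed

lemma pdTT_formula: assumes "blk c = j" "q \<in> SS j"
  shows "fin_pd (Inr c) (TT j) q = wt j (fst q) * (2 * (Phi j q * P1 j c q))"
proof -
  have j: "j \<le> b" using assms(1) blk_le' by auto
  have "hasd (Inr c) (TT j) q (0 * (Phi j q * Phi j q) + wt j (fst q) * (P1 j c q * Phi j q + Phi j q * P1 j c q))"
    unfolding TT_def by (intro hasd_mult hasd_fst hasd_Phi0 j assms)
  then show ?thesis by (rule hasd_pd[OF hasd_eq]) (simp add: algebra_simps)
qed

lemma gfun_formula: assumes "blk c = j" "p \<in> SS j"
  shows "gfun a c p = wt j (fst p) * (P1 j a p * P1 j c p + Phi j p * P2 j a c p)"
proof -
  have j: "j \<le> b" using assms(1) blk_le' by auto
  define E1 where "E1 q = wt j (fst q) * (2 * (Phi j q * P1 j c q))" for q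
  have h1: "hasd (Inr a) E1 p (0 * (2 * (Phi j p * P1 j c p)) + wt j (fst p) * (0 * (Phi j p * P1 j c p) + 2 * (P1 j a p * P1 j c p + Phi j p * P2 j a c p)))"
    unfolding E1_def by (intro hasd_mult hasd_fst hasd_Phi0 hasd_P1 hasd_const j assms)
  have h2: "hasd (Inr a) (fin_pd (Inr c) (TT j)) p (0 * (2 * (Phi j p * P1 j c p)) + wt j (fst p) * (0 * (Phi j p * P1 j c p) + 2 * (P1 j a p * P1 j c p + Phi j p * P2 j a c p)))"
    by (rule hasd_local[OF SS_open[OF j] assms(2) _ h1]) (simp add: pdTT_formula[OF assms(1)] E1_def)
  show ?thesis unfolding gfun_glob using hasd_pd[OF h2] assms(1) by (simp add: algebra_simps)
qed

lemma gfun_formula2: assumes "blk a = j" "p \<in> SS j"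
  shows "gfun a c p = wt j (fst p) * (P1 j a p * P1 j c p + Phi j p * P2 j a c p)"
proof (cases "blk c = j")
  case True then show ?thesis using gfun_formula assms by blast
next
  case False
  have j: "j \<le> b" using assms(1) blk_le' by auto
  show ?thesis using False assms gfun_zero[of a c] P1_zero[OF j False] P2_zero[OF j False] by simp
qed

lemma gfun_hasd: assumes "blk c = j" "p \<in> SS j"
  shows "hasd (Inr d) (gfun a c) p (fin_pd (Inr d) (gfun a c) p)"
proof -
  have j: "j \<le> b" using assms(1) blk_le' by auto
  obtain V where V: "hasd (Inr d) (P2 j a c) p V" using hasd_P2[OF j assms(2)] by blast
  define E2 where "E2 q = wt j (fst q) * (P1 j a q * P1 j c q + Phi j q * P2 j a c q)" for q
  have "hasd (Inr d) E2 p (0 * (P1 j a p * P1 j c p + Phi j p * P2 j a c p) + wt j (fst p) * ((P2 j d a p * P1 j c p + P1 j a p * P2 j d c p) + (P1 j d p * P2 j a c p + Phi j p * V)))"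
    unfolding E2_def by (intro hasd_mult hasd_add hasd_fst hasd_Phi0 hasd_P1 V j assms)
  then have "hasd (Inr d) (gfun a c) p (0 * (P1 j a p * P1 j c p + Phi j p * P2 j a c p) + wt j (fst p) * ((P2 j d a p * P1 j c p + P1 j a p * P2 j d c p) + (P1 j d p * P2 j a c p + Phi j p * V)))"
    by (rule hasd_local[OF SS_open[OF j] assms(2), rotated]) (simp add: E2_def gfun_formula[OF assms(1)])
  then show ?thesis using hasd_pd by metis
qed

lemma eul1: assumes "j \<le> b" "q \<in> SS j" shows "(\<Sum>c\<in>UNIV. snd q $ c * P1 j c q) = Phi j q"
  using euler[OF smooth[OF assms(1)] Phi_homog[OF assms(1)], of "fst q" "snd q"] assms(2)
  by (simp add: P1_def)

lemma eul2: assumes "j \<le> b" "q \<in> SS j" shows "(\<Sum>a\<in>UNIV. snd q $ a * P2 j a c q) = 0"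
proof -
  have "homog (SS j) (fin_ipd [Inr c] (Phi j)) (1 - 1)"
    using homog_step[OF smooth[OF assms(1)] SS_scinv Phi_homog[OF assms(1)]] by simp
  from euler[OF smooth[OF assms(1)] this, of "fst q" "snd q"] assms(2) show ?thesis
    by (simp add: P2_def)
qed

lemma eul3: assumes "j \<le> b" "q \<in> SS j" shows "(\<Sum>c\<in>UNIV. snd q $ c * P2 j a c q) = 0"
proof -
  define H where "H q = (\<Sum>c\<in>UNIV. snd q $ c * P1 j c q)" for q
  have h1: "hasd (Inr a) H q (\<Sum>c\<in>UNIV. (if c = a then 1 else 0) * P1 j c q + snd q $ c * P2 j a c q)"
    unfolding H_def by (intro hasd_sum hasd_mult hasd_snd hasd_P1 assms) auto
  have h2: "hasd (Inr a) H q (P1 j a q)"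
    by (rule hasd_local[OF SS_open[OF assms(1)] assms(2) _ hasd_Phi0[OF assms]]) (simp add: H_def eul1 assms(1))
  have "(\<Sum>c\<in>UNIV. (if c = a then 1 else 0) * P1 j c q + snd q $ c * P2 j a c q) = P1 j a q + (\<Sum>c\<in>UNIV. snd q $ c * P2 j a c q)"
    by (simp add: sum.distrib sum_delta_mult)
  then show ?thesis using hasd_unique[OF h1 h2] by simp
qed

lemma Gy: assumes "blk a = j" "p \<in> SS j"
  shows "(\<Sum>c\<in>UNIV. gfun a c p * snd p $ c) = wt j (fst p) * P1 j a p * Phi j p"
proof -
  have j: "j \<le> b" using assms(1) blk_le' by auto
  have "(\<Sum>c\<in>UNIV. gfun a c p * snd p $ c) = (\<Sum>c\<in>UNIV. wt j (fst p) * P1 j a p * (snd p $ c * P1 j c p) + wt j (fst p) * Phi j p * (snd p $ c * P2 j a c p))"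
    by (intro sum.cong refl) (simp add: gfun_formula2[OF assms] algebra_simps)
  also have "\<dots> = wt j (fst p) * P1 j a p * Phi j p"
    by (simp add: sum.distrib sum_distrib_left[symmetric] eul1[OF j assms(2)] eul3[OF j assms(2)])
  finally show ?thesis .
qed

lemma Ccontr: assumes "blk c = j" "p \<in> SS j"
  shows "(\<Sum>a\<in>UNIV. snd p $ a * fin_pd (Inr d) (gfun a c) p) = 0"
proof -
  have j: "j \<le> b" using assms(1) blk_le' by auto
  define G where "G q = (\<Sum>a\<in>UNIV. snd q $ a * gfun a c q)" for q
  have h1: "hasd (Inr d) G p (\<Sum>a\<in>UNIV. (if a = d then 1 else 0) * gfun a c p + snd p $ a * fin_pd (Inr d) (gfun a c) p)"
    unfolding G_def by (intro hasd_sum hasd_mult hasd_snd gfun_hasd[OF assms]) auto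
  have eqG: "G q = wt j (fst q) * (P1 j c q * Phi j q)" if "q \<in> SS j" for q
  proof -
    have "G q = (\<Sum>a\<in>UNIV. wt j (fst q) * P1 j c q * (snd q $ a * P1 j a q) + wt j (fst q) * Phi j q * (snd q $ a * P2 j a c q))"
      unfolding G_def by (intro sum.cong refl) (simp add: gfun_formula[OF assms(1) that] algebra_simps)
    also have "\<dots> = wt j (fst q) * (P1 j c q * Phi j q)"
      by (simp add: sum.distrib sum_distrib_left[symmetric] eul1[OF j that] eul2[OF j that])
    finally show ?thesis .
  qed
  have h2': "hasd (Inr d) (\<lambda>q. wt j (fst q) * (P1 j c q * Phi j q)) p (0 * (P1 j c p * Phi j p) + wt j (fst p) * (P2 j d c p * Phi j p + P1 j c p * P1 j d p))"
    by (intro hasd_mult hasd_fst hasd_Phi0 hasd_P1 j assms)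
  have h2: "hasd (Inr d) G p (gfun d c p)"
  proof -
    have gd: "gfun d c p = wt j (fst p) * (P1 j d p * P1 j c p + Phi j p * P2 j d c p)"
      by (rule gfun_formula[OF assms])
    have "0 * (P1 j c p * Phi j p) + wt j (fst p) * (P2 j d c p * Phi j p + P1 j c p * P1 j d p) = gfun d c p"
      unfolding gd by (simp add: algebra_simps)
    then show ?thesis by (intro hasd_local[OF SS_open[OF j] assms(2) eqG hasd_eq[OF h2']])
  qed
  have "(\<Sum>a\<in>UNIV. (if a = d then 1 else 0) * gfun a c p + snd p $ a * fin_pd (Inr d) (gfun a c) p) = gfun d c p + (\<Sum>a\<in>UNIV. snd p $ a * fin_pd (Inr d) (gfun a c) p)"
    by (simp add: sum.distrib sum_delta_mult)
  then show ?thesis using hasd_unique[OF h1 h2] by simp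
qed

end


context twp begin

abbreviation "LL \<equiv> twisted_F b Fs f"

lemma dom_SS: "(x, y) \<in> product_domain blk b U \<Longrightarrow> j \<le> b \<Longrightarrow> (x, y) \<in> SS j"
  unfolding product_domain_def SS_def by auto

lemma wt_pos: assumes "(x, y) \<in> product_domain blk b U" "j \<le> b" shows "wt j x > 0"
proof (cases "j = 0")
  case True then show ?thesis by (simp add: wt_def)
next
  case False
  then have "j \<in> {1..b}" using assms(2) by auto
  then have "\<forall>x \<in> U 0 \<inter> U j. f j x > 0" using tw unfolding twist_function_def by blast
  moreover have "x \<in> U 0 \<inter> U j" using assms unfolding product_domain_def by auto
  ultimately have "f j x > 0" by blast
  then show ?thesis using False by (simp add: wt_def)
qed

lemma C_contr_blk: assumes "(x, y) \<in> product_domain blk b U" "j \<le> b"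
  shows "(\<Sum>a\<in>{a. blk a = j}. y $ a * fin_C LL x y a c d) = 0"
proof (cases "blk c = j")
  case True
  have "(\<Sum>a\<in>{a. blk a = j}. y $ a * fin_C LL x y a c d) = (\<Sum>a\<in>UNIV. y $ a * fin_C LL x y a c d)"
    by (rule sum.mono_neutral_left) (use True C_zero in auto)
  also have "\<dots> = 1/2 * (\<Sum>a\<in>UNIV. snd (x, y) $ a * fin_pd (Inr d) (gfun a c) (x, y))"
    by (simp add: C_gfun sum_distrib_left algebra_simps)
  also have "\<dots> = 0" using Ccontr[OF True dom_SS[OF assms]] by simp
  finally show ?thesis .
next
  case False
  then show ?thesis by (intro sum.neutral) (auto simp: C_zero)
qed

lemma I_contr_blk: assumes "(x, y) \<in> product_domain blk b U" "j \<le> b"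
  shows "(\<Sum>a\<in>{a. blk a = j}. y $ a * fin_I LL x y a) = 0"
proof -
  let ?M = "matrix_inv (fin_gmat LL x y)"
  have "(\<Sum>a\<in>{a. blk a = j}. y $ a * fin_I LL x y a)
      = (\<Sum>a\<in>{a. blk a = j}. \<Sum>c\<in>UNIV. \<Sum>d\<in>UNIV. ?M $ c $ d * (y $ a * fin_C LL x y a c d))"
    unfolding fin_I_def by (simp add: sum_distrib_left algebra_simps)
  also have "\<dots> = (\<Sum>c\<in>UNIV. \<Sum>d\<in>UNIV. \<Sum>a\<in>{a. blk a = j}. ?M $ c $ d * (y $ a * fin_C LL x y a c d))"
    by (simp add: sum.swap[of _ "{a. blk a = j}"] sum.swap[of _ "{a. blk a = j}" UNIV])
  also have "\<dots> = (\<Sum>c\<in>UNIV. \<Sum>d\<in>UNIV. ?M $ c $ d * (\<Sum>a\<in>{a. blk a = j}. y $ a * fin_C LL x y a c d))"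
    by (simp add: sum_distrib_left)
  also have "\<dots> = 0" by (simp add: C_contr_blk[OF assms])
  finally show ?thesis .
qed

lemma g_eq: "fin_g LL x y a c = gfun a c (x, y)"
  by (simp add: gfun_def)

lemma Gy_blk: assumes "(x, y) \<in> product_domain blk b U" "blk a = j"
  shows "(\<Sum>c\<in>{c. blk c = j}. fin_g LL x y a c * y $ c) = (\<Sum>c\<in>UNIV. fin_g LL x y a c * y $ c)"
  by (rule sum.mono_neutral_left) (use assms gfun_zero in \<open>auto simp: g_eq\<close>)

lemma Gy_val: assumes "(x, y) \<in> product_domain blk b U" "blk a = j"
  shows "(\<Sum>c\<in>UNIV. fin_g LL x y a c * y $ c) = wt j x * P1 j a (x, y) * Phi j (x, y)"
proof -
  have j: "j \<le> b" using assms(2) blk_le' by auto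
  show ?thesis using Gy[OF assms(2) dom_SS[OF assms(1) j]] by (simp add: g_eq)
qed

lemma qval: assumes "(x, y) \<in> product_domain blk b U" "j \<le> b"
  shows "(\<Sum>a\<in>{a. blk a = j}. y $ a * (\<Sum>c\<in>UNIV. fin_g LL x y a c * y $ c)) = wt j x * (Phi j (x, y))^2"
proof -
  have "(\<Sum>a\<in>{a. blk a = j}. y $ a * (\<Sum>c\<in>UNIV. fin_g LL x y a c * y $ c))
      = (\<Sum>a\<in>{a. blk a = j}. wt j x * Phi j (x, y) * (y $ a * P1 j a (x, y)))"
    by (intro sum.cong refl) (subst Gy_val[OF assms(1), where j=j], simp, simp add: algebra_simps)
  also have "\<dots> = wt j x * Phi j (x, y) * (\<Sum>a\<in>{a. blk a = j}. y $ a * P1 j a (x, y))"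
    by (simp add: sum_distrib_left)
  also have "(\<Sum>a\<in>{a. blk a = j}. y $ a * P1 j a (x, y)) = (\<Sum>a\<in>UNIV. y $ a * P1 j a (x, y))"
    by (rule sum.mono_neutral_left) (use P1_zero[OF assms(2)] in auto)
  also have "\<dots> = Phi j (x, y)" using eul1[OF assms(2) dom_SS[OF assms]] by simp
  finally show ?thesis by (simp add: power2_eq_square)
qed

lemma Qval: assumes "(x, y) \<in> product_domain blk b U" "j \<le> b"
  shows "(\<Sum>c\<in>{c. blk c = j}. \<Sum>e\<in>{e. blk e = j}. y $ c * y $ e * fin_h LL x y c e)
       = wt j x * (Phi j (x, y))^2 - 1 / (LL x y)^2 * (wt j x * (Phi j (x, y))^2)^2"
proof -
  define G where "G a = (\<Sum>c\<in>UNIV. fin_g LL x y a c * y $ c)" for a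
  define q where "q = wt j x * (Phi j (x, y))^2"
  have hq: "(\<Sum>a\<in>{a. blk a = j}. y $ a * G a) = q" unfolding G_def q_def by (rule qval[OF assms])
  have hterm: "y $ c * y $ e * fin_h LL x y c e = y $ c * (fin_g LL x y c e * y $ e) - 1 / (LL x y)^2 * (y $ c * G c) * (y $ e * G e)" for c e
    unfolding fin_h_def G_def by (simp add: algebra_simps)
  have "(\<Sum>c\<in>{c. blk c = j}. \<Sum>e\<in>{e. blk e = j}. y $ c * y $ e * fin_h LL x y c e)
      = (\<Sum>c\<in>{c. blk c = j}. y $ c * (\<Sum>e\<in>{e. blk e = j}. fin_g LL x y c e * y $ e)
           - 1 / (LL x y)^2 * (y $ c * G c) * (\<Sum>e\<in>{e. blk e = j}. y $ e * G e))"
    by (intro sum.cong refl) (simp only: hterm sum_subtractf, simp add: sum_distrib_left)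
  also have "\<dots> = (\<Sum>c\<in>{c. blk c = j}. y $ c * G c - 1 / (LL x y)^2 * q * (y $ c * G c))"
    by (intro sum.cong refl) (simp only: hq, simp add: Gy_blk[OF assms(1), where j=j] G_def)
  also have "\<dots> = q - 1 / (LL x y)^2 * q * q"
  proof -
    have "(\<Sum>c\<in>{c. blk c = j}. y $ c * G c - 1 / (LL x y)^2 * q * (y $ c * G c))
        = (\<Sum>c\<in>{c. blk c = j}. y $ c * G c) - 1 / (LL x y)^2 * q * (\<Sum>c\<in>{c. blk c = j}. y $ c * G c)"
      by (simp only: sum_subtractf sum_distrib_left)
    then show ?thesis by (simp only: hq)
  qed
  finally show ?thesis by (simp add: q_def power2_eq_square)
qed

lemma LL_sq: "(LL x y)^2 = (\<Sum>i\<in>{..b}. wt i x * (Phi i (x, y))^2)"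
  using sq[of x y] by (simp add: TT_def power2_eq_square)

lemma Q_nz: assumes "(x, y) \<in> product_domain blk b U" "j \<le> b" "i \<le> b" "i \<noteq> j"
  shows "wt j x * (Phi j (x, y))^2 - 1 / (LL x y)^2 * (wt j x * (Phi j (x, y))^2)^2 \<noteq> 0"
proof -
  define q where "q = wt j x * (Phi j (x, y))^2"
  define r where "r = wt i x * (Phi i (x, y))^2"
  have pos: "wt k x * (Phi k (x, y))^2 > 0" if "k \<le> b" for k
    using wt_pos[OF assms(1) that] Phi_pos[OF that dom_SS[OF assms(1) that]] by simp
  have q: "q > 0" using pos[OF assms(2)] by (simp add: q_def)
  have r: "r > 0" using pos[OF assms(3)] by (simp add: r_def)
  have "(LL x y)^2 = (\<Sum>k\<in>{..b}. wt k x * (Phi k (x, y))^2)" by (rule LL_sq)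
  also have "\<dots> \<ge> (\<Sum>k\<in>{i, j}. wt k x * (Phi k (x, y))^2)"
    by (rule sum_mono2) (use assms pos in \<open>auto intro: less_imp_le\<close>)
  finally have L2: "(LL x y)^2 \<ge> q + r" using assms(4) by (simp add: q_def r_def)
  then have Lp: "(LL x y)^2 > q" using r by simp
  have L2p: "(LL x y)^2 > 0" using Lp q by linarith
  have "q / (LL x y)^2 < 1" using Lp L2p by simp
  then have "q * (q / (LL x y)^2) < q * 1" using q by (intro mult_strict_left_mono)
  moreover have "1 / (LL x y)^2 * q^2 = q * (q / (LL x y)^2)" by (simp add: power2_eq_square)
  ultimately have "1 / (LL x y)^2 * q^2 < q" by (simp add: power2_eq_square)
  then have "q - 1 / (LL x y)^2 * q^2 \<noteq> 0" by linarith
  then show ?thesis unfolding q_def .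
qed

end


context twp begin

lemma I_zero:
  assumes CR: "C_reducible_on (product_domain blk b U) (twisted_F b Fs f)"
    and dom: "(x, y) \<in> product_domain blk b U"
  shows "fin_I LL x y a = 0"
proof -
  define i where "i = blk a"
  define j where "j = (if i = 0 then 1 else (0::nat))"
  have j: "j \<le> b" "j \<noteq> i" using b1 by (auto simp: j_def)
  have i: "i \<le> b" using blk_le' by (simp add: i_def)
  let ?Bj = "{c. blk c = j}"
  let ?h = "fin_h LL x y" and ?I = "fin_I LL x y"
  have E: "?I a * ?h c e + ?I c * ?h a e + ?I e * ?h a c = 0" if "c \<in> ?Bj" for c e
  proof -
    have "fin_M LL x y a c e = 0" using CR dom unfolding C_reducible_on_def by auto
    moreover have "fin_C LL x y a c e = 0" using that j by (intro C_zero) (auto simp: i_def)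
    ultimately show ?thesis unfolding fin_M_def
      by (simp add: add_pos_nonneg)
  qed
  have "0 = (\<Sum>c\<in>?Bj. \<Sum>e\<in>?Bj. y $ c * y $ e * (?I a * ?h c e + ?I c * ?h a e + ?I e * ?h a c))"
    using E by simp
  also have "\<dots> = (\<Sum>c\<in>?Bj. \<Sum>e\<in>?Bj. ?I a * (y $ c * y $ e * ?h c e) + (y $ c * ?I c) * (y $ e * ?h a e) + (y $ e * ?I e) * (y $ c * ?h a c))"
    by (intro sum.cong refl) (simp add: algebra_simps)
  also have "\<dots> = (\<Sum>c\<in>?Bj. \<Sum>e\<in>?Bj. ?I a * (y $ c * y $ e * ?h c e)) + (\<Sum>c\<in>?Bj. \<Sum>e\<in>?Bj. (y $ c * ?I c) * (y $ e * ?h a e)) + (\<Sum>c\<in>?Bj. \<Sum>e\<in>?Bj. (y $ e * ?I e) * (y $ c * ?h a c))"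
    by (simp add: sum.distrib)
  also have "(\<Sum>c\<in>?Bj. \<Sum>e\<in>?Bj. (y $ c * ?I c) * (y $ e * ?h a e)) = (\<Sum>c\<in>?Bj. y $ c * ?I c) * (\<Sum>e\<in>?Bj. y $ e * ?h a e)"
    by (simp add: sum_product)
  also have "(\<Sum>c\<in>?Bj. \<Sum>e\<in>?Bj. (y $ e * ?I e) * (y $ c * ?h a c)) = (\<Sum>e\<in>?Bj. \<Sum>c\<in>?Bj. (y $ e * ?I e) * (y $ c * ?h a c))"
    by (rule sum.swap)
  also have "\<dots> = (\<Sum>e\<in>?Bj. y $ e * ?I e) * (\<Sum>c\<in>?Bj. y $ c * ?h a c)"
    by (simp add: sum_product)
  also have "(\<Sum>c\<in>?Bj. \<Sum>e\<in>?Bj. ?I a * (y $ c * y $ e * ?h c e)) = ?I a * (\<Sum>c\<in>?Bj. \<Sum>e\<in>?Bj. y $ c * y $ e * ?h c e)"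
    by (simp add: sum_distrib_left)
  finally have "?I a * (\<Sum>c\<in>?Bj. \<Sum>e\<in>?Bj. y $ c * y $ e * ?h c e) = 0"
    using I_contr_blk[OF dom j(1)] by simp
  moreover have "(\<Sum>c\<in>?Bj. \<Sum>e\<in>?Bj. y $ c * y $ e * ?h c e) \<noteq> 0"
    unfolding Qval[OF dom j(1)] using Q_nz[OF dom j(1) i] j(2) by simp
  ultimately show ?thesis by simp
qed

end

theorem theorem5p12:
  fixes blk :: "'n::finite \<Rightarrow> nat" and b :: nat
    and U :: "nat \<Rightarrow> (real^'n) set"
    and Fs :: "nat \<Rightarrow> real^'n \<Rightarrow> real^'n \<Rightarrow> real"
    and f :: "nat \<Rightarrow> real^'n \<Rightarrow> real"
  assumes "b \<ge> 1"
    and "\<forall>k. blk k \<le> b"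
    and "\<forall>i\<le>b. finsler_factor {k. blk k = i} (U i) (Fs i)"
    and "\<forall>i\<in>{1..b}. twist_function {k. blk k = 0} {k. blk k = i} (U 0) (U i) (f i)"
    and "C_reducible_on (product_domain blk b U) (twisted_F b Fs f)"
  shows "riemannian_on (product_domain blk b U) (twisted_F b Fs f)"
proof -
  interpret twp blk b U Fs f using assms(1-4) by unfold_locales
  show ?thesis unfolding riemannian_on_def
  proof (intro ballI allI, clarify)
    fix x y i j k assume dom: "(x, y) \<in> product_domain blk b U"
    have "fin_M (twisted_F b Fs f) x y i j k = 0" using assms(5) dom unfolding C_reducible_on_def by auto
    then show "fin_C (twisted_F b Fs f) x y i j k = 0"
      unfolding fin_M_def using I_zero[OF assms(5) dom] by simp
  qed
qed


end
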